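(* Let $\Omega\subset\mathbb{R}^n$ be connected, bounded and of class $C^\infty$, fix $\alpha\in(0,1)$ and distinct integers $n_1,\dots,n_K$. Let $(a^{ij}_\epsilon),(b^i_\epsilon),(\rho_\epsilon)\in\mathcal{E}_M(\overline{\Omega})$ satisfy for all $\epsilon<1$: $a^{ij}_\epsilon=a^{ji}_\epsilon$, $a^{ij}_\epsilon\xi_i\xi_j\ge\lambda_\epsilon|\xi|^2\ge C_1\epsilon^{a_1}|\xi|^2$; for all $k$, $|a^{ij}_\epsilon|_{k,\alpha;\Omega},|b^i_\epsilon|_{k,\alpha;\Omega}\le\Lambda_{k,\epsilon}\le C_2(k)\epsilon^{a_2(k)}$; $\{n_i:n_i<0\}\ne\emptyset$, $n_1=\min\{n_i:n_i<0\}$, $b^1_\epsilon\le-C_3\epsilon^{a_3}$; $\{n_i:n_i>0\}\ne\emptyset$, $n_K=\max\{n_i:n_i>0\}$, $b^K_\epsilon\ge C_4\epsilon^{a_4}$; $\rho_\epsilon\ge C_5\epsilon^{a_5}$, with positive constants $C_1,C_2(k),\dots,C_5$ and reals $a_1,a_2(k),\dots,a_5$ independent of $\epsilon$. Define $$\alpha'_\epsilon=\sup\Big\{c>0:\sum_{i=1}^K\sup_{x\in\overline{\Omega}}b^i_\epsilon(x)y^{n_i}<0\ \forall y\in(0,c)\Big\},\quad \beta'_\epsilon=\inf\Big\{c\in\mathbb{R}:\sum_{i=1}^K\inf_{x\in\overline{\Omega}}b^i_\epsilon(x)y^{n_i}>0\ \forall y\in(c,\infty)\Big\},$$ $\alpha_\epsilon=\min\{\alpha'_\epsilon,\inf_{\partial\Omega}\rho_\epsilon\}$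 and $\beta_\epsilon=\max\{\beta'_\epsilon,\sup_{\partial\Omega}\rho_\epsilon\}$. Then the nets $(\alpha_\epsilon)$, $(\beta_\epsilon)$, $(1/\alpha_\epsilon)$ and $(1/\beta_\epsilon)$ belong to $\overline{\mathbb{C}}$, the ring of generalized constants.
   Context: $\overline{\mathbb{C}}$ is the quotient of the set of nets $(r_\epsilon)_{\epsilon\in(0,1]}$ of complex numbers with $|r_\epsilon|=O(\epsilon^a)$ as $\epsilon\to0$ for some $a\in\mathbb{R}$ (moderate nets), by the nets with $|r_\epsilon|=O(\epsilon^a)$ for every $a\in\mathbb{R}$; a net "belongs to $\overline{\mathbb{C}}$" if it is moderate. Hölder norm: $|u|_{k,\alpha;\Omega}=\sum_{j\le k}\sup_{|\beta|=j}\sup_{\overline{\Omega}}|D^\beta u|+\sup_{|\beta|=k}\sup_{x\ne y}|D^\beta u(x)-D^\beta u(y)|/|x-y|^\alpha$. $\mathcal{E}_M(\overline{\Omega})$ is the set of nets $(u_\epsilon)_{\epsilon\in(0,1]}\subset C^\infty(\overline{\Omega})$ such that for every $k$ there is $a\in\mathbb{R}$ with $\sup_{|\beta|\le k,x\in\overline{\Omega}}|D^\beta u_\epsilon|=O(\epsilon^a)$. *)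

theory Defs
  imports "HOL-Analysis.Analysis" "HOL-Library.Landau_Symbols"
begin

definition partial :: "'n::finite \<Rightarrow> (real^'n \<Rightarrow> real) \<Rightarrow> real^'n \<Rightarrow> real" where
  "partial i f x = deriv (\<lambda>t. f (x + t *\<^sub>R axis i 1)) 0"

text \<open>Iterated partial derivatives; a list of coordinate indices of length j
  encodes a derivative of order j (for smooth functions the order is irrelevant).\<close>
fun Dlist :: "'n::finite list \<Rightarrow> (real^'n \<Rightarrow> real) \<Rightarrow> real^'n \<Rightarrow> real" where
  "Dlist [] f = f"
| "Dlist (i # is) f = partial i (Dlist is f)"

definition smooth_on :: "(real^'n::finite) set \<Rightarrow> (real^'n \<Rightarrow> real) \<Rightarrow> bool" where
  "smooth_on S f \<longleftrightarrow>
     (\<forall>is i. \<forall>x\<in>S. (\<lambda>t. Dlist is f (x + t *\<^sub>R axis i 1)) differentiable (at 0))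
   \<and> (\<forall>is. continuous_on S (Dlist is f))"

definition smooth_map_on :: "(real^'n::finite) set \<Rightarrow> (real^'n \<Rightarrow> real^'n) \<Rightarrow> bool" where
  "smooth_map_on S \<psi> \<longleftrightarrow> (\<forall>j. smooth_on S (\<lambda>x. \<psi> x $ j))"

definition C_inf_closure :: "(real^'n::finite) set \<Rightarrow> (real^'n \<Rightarrow> real) \<Rightarrow> bool" where
  "C_inf_closure \<Omega> u \<longleftrightarrow> smooth_on \<Omega> u \<and> continuous_on (closure \<Omega>) u \<and>
     (\<forall>is. \<exists>g. continuous_on (closure \<Omega>) g \<and> (\<forall>x\<in>\<Omega>. g x = Dlist is u x))"

text \<open>Domain of class C-infinity (Gilbarg--Trudinger, Sec. 6.2): each boundary point has a
  ball B and a smooth bijection psi of B onto an open D with smooth inverse, flattening the boundary.\<close>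
definition smooth_domain :: "(real^'n::finite) set \<Rightarrow> bool" where
  "smooth_domain \<Omega> \<longleftrightarrow> open \<Omega> \<and>
    (\<forall>p\<in>frontier \<Omega>. \<exists>r>0. \<exists>\<psi>::real^'n \<Rightarrow> real^'n. \<exists>k.
        inj_on \<psi> (ball p r) \<and> open (\<psi> ` ball p r)
      \<and> \<psi> ` (ball p r \<inter> \<Omega>) \<subseteq> {x. x $ k > 0}
      \<and> \<psi> ` (ball p r \<inter> frontier \<Omega>) \<subseteq> {x. x $ k = 0}
      \<and> smooth_map_on (ball p r) \<psi>
      \<and> smooth_map_on (\<psi> ` ball p r) (inv_into (ball p r) \<psi>))"

text \<open>Suprema over closure Omega are taken over Omega; for functions in C-infinity(closure Omega)
  these coincide by continuity of the extended derivatives.\<close>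
definition holder_norm :: "nat \<Rightarrow> real \<Rightarrow> (real^'n::finite) set \<Rightarrow> (real^'n \<Rightarrow> real) \<Rightarrow> ereal" where
  "holder_norm k \<alpha> \<Omega> u =
     (\<Sum>j\<le>k. SUP is\<in>{is. length is = j}. SUP x\<in>\<Omega>. ereal \<bar>Dlist is u x\<bar>)
   + (SUP is\<in>{is. length is = k}. SUP xy\<in>{(x,y). x \<in> \<Omega> \<and> y \<in> \<Omega> \<and> x \<noteq> y}.
        ereal (\<bar>Dlist is u (fst xy) - Dlist is u (snd xy)\<bar> / norm (fst xy - snd xy) powr \<alpha>))"

definition moderate_smooth_net :: "(real^'n::finite) set \<Rightarrow> (real \<Rightarrow> real^'n \<Rightarrow> real) \<Rightarrow> bool" where
  "moderate_smooth_net \<Omega> u \<longleftrightarrow>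
     (\<forall>\<epsilon>\<in>{0<..1}. C_inf_closure \<Omega> (u \<epsilon>)) \<and>
     (\<forall>k. \<exists>a C. \<forall>\<^sub>F \<epsilon> in at_right 0. \<forall>is. length is \<le> k \<longrightarrow>
            (\<forall>x\<in>\<Omega>. \<bar>Dlist is (u \<epsilon>) x\<bar> \<le> C * \<epsilon> powr a))"

text \<open>A net belongs to the generalized constants iff it is moderate.\<close>
definition moderate_net :: "(real \<Rightarrow> 'b::real_normed_field) \<Rightarrow> bool" where
  "moderate_net r \<longleftrightarrow> (\<exists>a::real. r \<in> O[at_right 0](\<lambda>\<epsilon>. of_real (\<epsilon> powr a)))"

end

theory Submission
  imports Defs
begin

lemma poly_small:
  fixes c :: "nat \<Rightarrow> real" and nn :: "nat \<Rightarrow> int"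
  assumes K: "1 \<le> K" and nn: "\<forall>i\<in>{1..K}. i \<noteq> 1 \<longrightarrow> nn 1 + 1 \<le> nn i"
    and c1: "c 1 \<le> - c3" and c3: "c3 > 0" and B: "B > 0"
    and cb: "\<forall>i\<in>{1..K}. \<bar>c i\<bar> \<le> B" and y: "0 < y" "y \<le> c3 / (real K * B + c3)"
  shows "(\<Sum>i=1..K. c i * y powi nn i) < 0"
proof -
  have pos: "0 < real K * B + c3" using B c3 K by (simp add: add_pos_pos)
  have y1: "y \<le> 1" using y(2) pos B K c3
    by (smt (verit, ccfv_SIG) divide_le_eq_1_pos of_nat_0_le_iff zero_le_mult_iff)
  let ?p = "y powi nn 1"
  have p: "?p > 0" using y by simp
  have each: "c i * y powi nn i \<le> B * y * ?p" if i: "i \<in> {1..K} - {1}" for i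
  proof -
    have "c i * y powi nn i \<le> \<bar>c i\<bar> * y powi nn i"
      using y by (intro mult_right_mono) auto
    also have "\<dots> \<le> B * y powi nn i" using cb i y by (intro mult_right_mono) auto
    also have "\<dots> \<le> B * y powi (nn 1 + 1)"
      using B y y1 nn i by (intro mult_left_mono power_int_decreasing) auto
    also have "\<dots> = B * y * ?p" using y by (simp add: power_int_add_1)
    finally show ?thesis .
  qed
  have "(\<Sum>i\<in>{1..K} - {1}. c i * y powi nn i) \<le> (\<Sum>i\<in>{1..K} - {1}. B * y * ?p)"
    by (rule sum_mono) (use each in auto)
  also have "\<dots> = real (K - 1) * (B * y * ?p)" using K by simp
  finally have rest: "(\<Sum>i\<in>{1..K} - {1}. c i * y powi nn i) \<le> real (K - 1) * (B * y * ?p)" .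
  have split: "(\<Sum>i=1..K. c i * y powi nn i) = c 1 * ?p + (\<Sum>i\<in>{1..K} - {1}. c i * y powi nn i)"
    using K by (subst sum.remove[of _ 1]) auto
  have KBy: "real (K - 1) * B * y < c3"
  proof -
    have "real (K - 1) * B * y \<le> real K * B * y" using B y K by (intro mult_right_mono) auto
    also have "\<dots> \<le> real K * B * (c3 / (real K * B + c3))" using y B by (intro mult_left_mono) auto
    also have "\<dots> < c3" using pos c3 B K by (simp add: field_simps)
    finally show ?thesis .
  qed
  have "c 1 * ?p \<le> - c3 * ?p" using c1 p by (intro mult_right_mono) auto
  hence "(\<Sum>i=1..K. c i * y powi nn i) \<le> ?p * (real (K - 1) * B * y - c3)"
    using split rest by (simp add: algebra_simps)
  also have "\<dots> < 0" using p KBy by (simp add: mult_pos_neg)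
  finally show ?thesis .
qed

lemma poly_large:
  fixes c :: "nat \<Rightarrow> real" and nn :: "nat \<Rightarrow> int"
  assumes K: "1 \<le> K" and nn: "\<forall>i\<in>{1..K}. i \<noteq> K \<longrightarrow> nn i + 1 \<le> nn K"
    and cK: "c K \<ge> c4" and c4: "c4 > 0" and B: "B > 0"
    and cb: "\<forall>i\<in>{1..K}. \<bar>c i\<bar> \<le> B" and y: "1 + real K * B / c4 \<le> y"
  shows "(\<Sum>i=1..K. c i * y powi nn i) > 0"
proof -
  have y1: "1 \<le> y" using y B c4 by (smt (verit) divide_nonneg_pos of_nat_0_le_iff zero_le_mult_iff)
  let ?q = "y powi (nn K - 1)"
  have q: "?q > 0" using y1 by simp
  have each: "c i * y powi nn i \<ge> - B * ?q" if i: "i \<in> {1..K} - {K}" for i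
  proof -
    have "- B * ?q \<le> - B * y powi nn i"
      using B y1 nn i by (simp, intro mult_left_mono power_int_increasing) auto
    also have "\<dots> \<le> - \<bar>c i\<bar> * y powi nn i" using cb i y1 by (intro mult_right_mono) auto
    also have "\<dots> \<le> c i * y powi nn i" using y1 by (intro mult_right_mono) auto
    finally show ?thesis .
  qed
  have "(\<Sum>i\<in>{1..K} - {K}. - B * ?q) \<le> (\<Sum>i\<in>{1..K} - {K}. c i * y powi nn i)"
    by (rule sum_mono) (use each in auto)
  moreover have "(\<Sum>i\<in>{1..K} - {K}. - B * ?q) = - (real (K - 1) * B * ?q)"
  proof -
    have "card ({1..K} - {K}) = K - 1" using K by simp
    thus ?thesis by simp
  qed
  ultimately have rest: "(\<Sum>i\<in>{1..K} - {K}. c i * y powi nn i) \<ge> - (real (K - 1) * B * ?q)" by linarith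
  have split: "(\<Sum>i=1..K. c i * y powi nn i) = c K * y powi nn K + (\<Sum>i\<in>{1..K} - {K}. c i * y powi nn i)"
    using K by (subst sum.remove[of _ K]) auto
  have yK: "y powi nn K = y * ?q"
    using power_int_add_1'[of y "nn K - 1"] y1 by simp
  have "c K * y powi nn K \<ge> c4 * y * ?q" using cK q y1 yK by (simp add: mult_right_mono)
  hence "(\<Sum>i=1..K. c i * y powi nn i) \<ge> ?q * (c4 * y - real (K - 1) * B)"
    using split rest by (simp add: algebra_simps)
  moreover have "c4 * y - real (K - 1) * B > 0"
  proof -
    have "c4 * (1 + real K * B / c4) \<le> c4 * y" using y c4 by (intro mult_left_mono) auto
    moreover have "c4 * (1 + real K * B / c4) = c4 + real K * B" using c4 by (simp add: field_simps)
    ultimately have "c4 * y \<ge> c4 + real K * B" by simp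
    moreover have "real (K - 1) * B \<le> real K * B" using B by (intro mult_right_mono) auto
    ultimately show ?thesis using c4 by linarith
  qed
  ultimately show ?thesis using q by (smt (verit) mult_pos_pos)
qed

lemma moderate_closure_bound:
  assumes "moderate_smooth_net \<Omega> u"
  shows "\<exists>D N. D > 0 \<and> N \<ge> 0 \<and> (\<forall>\<^sub>F \<epsilon> in at_right 0. \<forall>x\<in>closure \<Omega>. \<bar>u \<epsilon> x\<bar> \<le> D * \<epsilon> powr (-N))"
proof -
  from assms obtain a C where ev: "\<forall>\<^sub>F \<epsilon> in at_right 0. \<forall>is. length is \<le> 0 \<longrightarrow>
            (\<forall>x\<in>\<Omega>. \<bar>Dlist is (u \<epsilon>) x\<bar> \<le> C * \<epsilon> powr a)"
    unfolding moderate_smooth_net_def by blast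
  have cont: "\<forall>\<epsilon>\<in>{0<..1}. continuous_on (closure \<Omega>) (u \<epsilon>)"
    using assms unfolding moderate_smooth_net_def C_inf_closure_def by blast
  have ev01: "\<forall>\<^sub>F \<epsilon> in at_right (0::real). 0 < \<epsilon> \<and> \<epsilon> < 1"
    unfolding eventually_at_right_field by (intro exI[of _ 1]) auto
  have "\<forall>\<^sub>F \<epsilon> in at_right 0. \<forall>x\<in>closure \<Omega>. \<bar>u \<epsilon> x\<bar> \<le> (\<bar>C\<bar>+1) * \<epsilon> powr (-\<bar>a\<bar>)"
    using ev ev01
  proof eventually_elim
    case (elim \<epsilon>)
    have b: "\<forall>x\<in>\<Omega>. norm (u \<epsilon> x) \<le> (\<bar>C\<bar>+1) * \<epsilon> powr (-\<bar>a\<bar>)"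
    proof
      fix x assume x: "x \<in> \<Omega>"
      have "\<bar>u \<epsilon> x\<bar> \<le> C * \<epsilon> powr a" using elim(1) x by (metis Dlist.simps(1) le0 list.size(3))
      also have "\<dots> \<le> \<bar>C\<bar> * \<epsilon> powr a" by (intro mult_right_mono) auto
      also have "\<dots> \<le> (\<bar>C\<bar>+1) * \<epsilon> powr (-\<bar>a\<bar>)"
        using elim(2) by (intro mult_mono powr_mono') auto
      finally show "norm (u \<epsilon> x) \<le> (\<bar>C\<bar>+1) * \<epsilon> powr (-\<bar>a\<bar>)" by simp
    qed
    show ?case
    proof
      fix x assume "x \<in> closure \<Omega>"
      from continuous_on_closure_norm_le[OF _ b this] cont elim(2)
      show "\<bar>u \<epsilon> x\<bar> \<le> (\<bar>C\<bar>+1) * \<epsilon> powr (-\<bar>a\<bar>)" by simp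
    qed
  qed
  thus ?thesis by (intro exI[of _ "\<bar>C\<bar>+1"] exI[of _ "\<bar>a\<bar>"]) auto
qed

lemma moderate_netI:
  assumes "\<forall>\<^sub>F \<epsilon> in at_right 0. \<bar>f \<epsilon>\<bar> \<le> M * \<epsilon> powr e"
  shows "moderate_net (\<lambda>\<epsilon>. complex_of_real (f \<epsilon>))"
  unfolding moderate_net_def
proof (intro exI[of _ e] bigoI)
  show "\<forall>\<^sub>F x in at_right 0. norm (complex_of_real (f x)) \<le> M * norm (complex_of_real (x powr e))"
    using assms by eventually_elim simp
qed

theorem lemma5p6:
  fixes \<Omega> :: "(real^'n::finite) set" and \<alpha> :: real and K :: nat and nn :: "nat \<Rightarrow> int"
    and a :: "'n \<Rightarrow> 'n \<Rightarrow> real \<Rightarrow> real^'n \<Rightarrow> real"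
    and b :: "nat \<Rightarrow> real \<Rightarrow> real^'n \<Rightarrow> real"
    and \<rho> :: "real \<Rightarrow> real^'n \<Rightarrow> real"
    and lam :: "real \<Rightarrow> real" and \<Lambda> :: "nat \<Rightarrow> real \<Rightarrow> real"
    and C1 C3 C4 C5 a1 a3 a4 a5 :: real and C2 a2 :: "nat \<Rightarrow> real"
    and alpha' beta' alph bet :: "real \<Rightarrow> real"
  assumes dom: "open \<Omega>" "\<Omega> \<noteq> {}" "connected \<Omega>" "bounded \<Omega>" "smooth_domain \<Omega>"
    and alpha: "0 < \<alpha>" "\<alpha> < 1"
    and distinct: "inj_on nn {1..K}"
    and EM: "\<forall>i j. moderate_smooth_net \<Omega> (a i j)"
            "\<forall>i\<in>{1..K}. moderate_smooth_net \<Omega> (b i)"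
            "moderate_smooth_net \<Omega> \<rho>"
    and cpos: "C1 > 0" "\<forall>k. C2 k > 0" "C3 > 0" "C4 > 0" "C5 > 0"
    and sym: "\<forall>\<epsilon>\<in>{0<..<1}. \<forall>i j. \<forall>x\<in>closure \<Omega>. a i j \<epsilon> x = a j i \<epsilon> x"
    and ell: "\<forall>\<epsilon>\<in>{0<..<1}. \<forall>x\<in>closure \<Omega>. \<forall>\<xi>::real^'n.
               (\<Sum>i\<in>UNIV. \<Sum>j\<in>UNIV. a i j \<epsilon> x * \<xi>$i * \<xi>$j) \<ge> lam \<epsilon> * (norm \<xi>)^2
             \<and> lam \<epsilon> * (norm \<xi>)^2 \<ge> C1 * \<epsilon> powr a1 * (norm \<xi>)^2"
    and hold: "\<forall>k. \<forall>\<epsilon>\<in>{0<..<1}.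
               (\<forall>i j. holder_norm k \<alpha> \<Omega> (a i j \<epsilon>) \<le> ereal (\<Lambda> k \<epsilon>))
             \<and> (\<forall>i\<in>{1..K}. holder_norm k \<alpha> \<Omega> (b i \<epsilon>) \<le> ereal (\<Lambda> k \<epsilon>))
             \<and> \<Lambda> k \<epsilon> \<le> C2 k * \<epsilon> powr a2 k"
    and neg: "{nn i | i. i \<in> {1..K} \<and> nn i < 0} \<noteq> {}"
             "nn 1 = Min {nn i | i. i \<in> {1..K} \<and> nn i < 0}"
             "\<forall>\<epsilon>\<in>{0<..<1}. \<forall>x\<in>closure \<Omega>. b 1 \<epsilon> x \<le> - C3 * \<epsilon> powr a3"
    and pos: "{nn i | i. i \<in> {1..K} \<and> nn i > 0} \<noteq> {}"
             "nn K = Max {nn i | i. i \<in> {1..K} \<and> nn i > 0}"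
             "\<forall>\<epsilon>\<in>{0<..<1}. \<forall>x\<in>closure \<Omega>. b K \<epsilon> x \<ge> C4 * \<epsilon> powr a4"
    and rho: "\<forall>\<epsilon>\<in>{0<..<1}. \<forall>x\<in>closure \<Omega>. \<rho> \<epsilon> x \<ge> C5 * \<epsilon> powr a5"
    and alpha'_def: "\<And>\<epsilon>. alpha' \<epsilon> = Sup {c. c > 0 \<and>
              (\<forall>y\<in>{0<..<c}. (\<Sum>i=1..K. Sup (b i \<epsilon> ` closure \<Omega>) * y powi nn i) < 0)}"
    and beta'_def: "\<And>\<epsilon>. beta' \<epsilon> = Inf {c::real.
              (\<forall>y\<in>{c<..}. (\<Sum>i=1..K. Inf (b i \<epsilon> ` closure \<Omega>) * y powi nn i) > 0)}"
    and alph_def: "\<And>\<epsilon>. alph \<epsilon> = min (alpha' \<epsilon>) (Inf (\<rho> \<epsilon> ` frontier \<Omega>))"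
    and bet_def: "\<And>\<epsilon>. bet \<epsilon> = max (beta' \<epsilon>) (Sup (\<rho> \<epsilon> ` frontier \<Omega>))"
  shows "moderate_net (\<lambda>\<epsilon>. complex_of_real (alph \<epsilon>))
       \<and> moderate_net (\<lambda>\<epsilon>. complex_of_real (bet \<epsilon>))
       \<and> moderate_net (\<lambda>\<epsilon>. complex_of_real (1 / alph \<epsilon>))
       \<and> moderate_net (\<lambda>\<epsilon>. complex_of_real (1 / bet \<epsilon>))"
proof -
  obtain i0 where i0: "i0 \<in> {1..K}" "nn i0 < 0" using neg(1) by blast
  hence K1: "1 \<le> K" by simp
  have oneK: "1 \<in> {1..K}" "K \<in> {1..K}" using K1 by auto
  let ?Sn = "{nn i | i. i \<in> {1..K} \<and> nn i < 0}"
  let ?Sp = "{nn i | i. i \<in> {1..K} \<and> nn i > 0}"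
  have finSn: "finite ?Sn"
  proof -
    have "?Sn = nn ` {i\<in>{1..K}. nn i < 0}" by auto
    thus ?thesis by simp
  qed
  have finSp: "finite ?Sp"
  proof -
    have "?Sp = nn ` {i\<in>{1..K}. nn i > 0}" by auto
    thus ?thesis by simp
  qed
  have "nn 1 \<in> ?Sn" using Min_in[OF finSn neg(1)] neg(2) by simp
  hence nn1neg: "nn 1 < 0" by auto
  have "nn K \<in> ?Sp" using Min_in[OF finSp pos(1)] Max_in[OF finSp pos(1)] pos(2) by simp
  hence nnKpos: "nn K > 0" by auto
  have n1: "\<forall>i\<in>{1..K}. i \<noteq> 1 \<longrightarrow> nn 1 + 1 \<le> nn i"
  proof (intro ballI impI)
    fix i assume i: "i \<in> {1..K}" "i \<noteq> 1"
    have ne: "nn i \<noteq> nn 1" using distinct i oneK unfolding inj_on_def by blast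
    show "nn 1 + 1 \<le> nn i"
    proof (cases "nn i < 0")
      case True
      hence "nn i \<in> ?Sn" using i by blast
      hence "nn 1 \<le> nn i" using Min_le[OF finSn] neg(2) by simp
      thus ?thesis using ne by simp
    next
      case False thus ?thesis using nn1neg by simp
    qed
  qed
  have nK: "\<forall>i\<in>{1..K}. i \<noteq> K \<longrightarrow> nn i + 1 \<le> nn K"
  proof (intro ballI impI)
    fix i assume i: "i \<in> {1..K}" "i \<noteq> K"
    have ne: "nn i \<noteq> nn K" using distinct i oneK unfolding inj_on_def by blast
    show "nn i + 1 \<le> nn K"
    proof (cases "nn i > 0")
      case True
      hence "nn i \<in> ?Sp" using i by blast
      hence "nn i \<le> nn K" using Max_ge[OF finSp] pos(2) by simp
      thus ?thesis using ne by simp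
    next
      case False thus ?thesis using nnKpos by simp
    qed
  qed
  have clne: "closure \<Omega> \<noteq> {}" using dom(2) by simp
  have frne: "frontier \<Omega> \<noteq> {}"
    using frontier_not_empty[OF dom(2)] dom(4) not_bounded_UNIV by blast
  have frcl: "frontier \<Omega> \<subseteq> closure \<Omega>" unfolding frontier_def by blast
  have hDN: "\<forall>i\<in>{1..K}. \<exists>D N. D > 0 \<and> N \<ge> 0 \<and> (\<forall>\<^sub>F \<epsilon> in at_right 0. \<forall>x\<in>closure \<Omega>. \<bar>b i \<epsilon> x\<bar> \<le> D * \<epsilon> powr (-N))"
    using EM(2) moderate_closure_bound by blast
  then obtain Df Nf where DNf: "\<forall>i\<in>{1..K}. Df i > 0 \<and> Nf i \<ge> 0 \<and> (\<forall>\<^sub>F \<epsilon> in at_right 0. \<forall>x\<in>closure \<Omega>. \<bar>b i \<epsilon> x\<bar> \<le> Df i * \<epsilon> powr (-Nf i))"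
  proof -
    obtain Df where h1: "\<forall>i\<in>{1..K}. \<exists>N. Df i > 0 \<and> N \<ge> 0 \<and> (\<forall>\<^sub>F \<epsilon> in at_right 0. \<forall>x\<in>closure \<Omega>. \<bar>b i \<epsilon> x\<bar> \<le> Df i * \<epsilon> powr (-N))"
      using bchoice[OF hDN] by blast
    obtain Nf where "\<forall>i\<in>{1..K}. Df i > 0 \<and> Nf i \<ge> 0 \<and> (\<forall>\<^sub>F \<epsilon> in at_right 0. \<forall>x\<in>closure \<Omega>. \<bar>b i \<epsilon> x\<bar> \<le> Df i * \<epsilon> powr (-Nf i))"
      using bchoice[OF h1] by blast
    thus ?thesis using that by blast
  qed
  obtain Dr Nr where DNr: "Dr > 0" "Nr \<ge> 0" "\<forall>\<^sub>F \<epsilon> in at_right 0. \<forall>x\<in>closure \<Omega>. \<bar>\<rho> \<epsilon> x\<bar> \<le> Dr * \<epsilon> powr (-Nr)"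
    using moderate_closure_bound[OF EM(3)] by blast
  define D where "D = (\<Sum>i\<in>{1..K}. Df i)"
  define N where "N = (\<Sum>i\<in>{1..K}. Nf i)"
  have Dpos: "D > 0" unfolding D_def using DNf K1 by (intro sum_pos) auto
  have Nnn: "N \<ge> 0" unfolding N_def using DNf by (intro sum_nonneg) auto
  have DfD: "Df i \<le> D" if "i \<in> {1..K}" for i
    unfolding D_def using that DNf by (intro member_le_sum) (auto intro: less_imp_le)
  have NfN: "Nf i \<le> N" if "i \<in> {1..K}" for i
    unfolding N_def using that DNf by (intro member_le_sum) auto
  have evb: "\<forall>\<^sub>F \<epsilon> in at_right 0. \<forall>i\<in>{1..K}. \<forall>x\<in>closure \<Omega>. \<bar>b i \<epsilon> x\<bar> \<le> Df i * \<epsilon> powr (-Nf i)"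
    using DNf by (intro eventually_ball_finite) auto
  have ev01: "\<forall>\<^sub>F \<epsilon> in at_right (0::real). 0 < \<epsilon> \<and> \<epsilon> < 1"
    unfolding eventually_at_right_field by (intro exI[of _ 1]) auto
  define E where "E = N + Nr + \<bar>a3\<bar> + \<bar>a4\<bar> + \<bar>a5\<bar>"
  define M1 where "M1 = 1 + real K * D / C4"
  define M4 where "M4 = 1 + real K * D / C3"
  have ev: "\<forall>\<^sub>F \<epsilon> in at_right 0. \<bar>alph \<epsilon>\<bar> \<le> M1 * \<epsilon> powr (-E) \<and> \<bar>bet \<epsilon>\<bar> \<le> (M1 + Dr) * \<epsilon> powr (-E)
      \<and> \<bar>1 / alph \<epsilon>\<bar> \<le> (M4 + 1 / C5) * \<epsilon> powr (-E) \<and> \<bar>1 / bet \<epsilon>\<bar> \<le> M4 * \<epsilon> powr (-E)"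
    using evb DNr(3) ev01
  proof eventually_elim
    case (elim \<epsilon>)
    have e0: "0 < \<epsilon>" and e1: "\<epsilon> < 1" using elim(3) by auto
    have eps01: "\<epsilon> \<in> {0<..<1}" using e0 e1 by simp
    have pw: "\<epsilon> powr p \<le> \<epsilon> powr q" if "q \<le> p" for p q
      using powr_mono'[OF that] e0 e1 by simp
    define B where "B = D * \<epsilon> powr (-N)"
    have Bpos: "B > 0" unfolding B_def using Dpos e0 by simp
    have bB: "\<bar>b i \<epsilon> x\<bar> \<le> B" if "i \<in> {1..K}" "x \<in> closure \<Omega>" for i x
    proof -
      have "\<bar>b i \<epsilon> x\<bar> \<le> Df i * \<epsilon> powr (-Nf i)" using elim(1) that by blast
      also have "\<dots> \<le> D * \<epsilon> powr (-N)"
        using DfD[OF that(1)] NfN[OF that(1)] DNf that(1) Dpos by (intro mult_mono pw) auto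
      finally show ?thesis unfolding B_def .
    qed
    have bBu: "b i \<epsilon> x \<le> B" and bBl: "- B \<le> b i \<epsilon> x" if "i \<in> {1..K}" "x \<in> closure \<Omega>" for i x
      using bB[OF that] by linarith+
    define c3 where "c3 = C3 * \<epsilon> powr a3"
    define c4 where "c4 = C4 * \<epsilon> powr a4"
    define c5 where "c5 = C5 * \<epsilon> powr a5"
    have c3p: "c3 > 0" and c4p: "c4 > 0" and c5p: "c5 > 0"
      unfolding c3_def c4_def c5_def using cpos e0 by auto
    define S where "S i = Sup (b i \<epsilon> ` closure \<Omega>)" for i
    define I where "I i = Inf (b i \<epsilon> ` closure \<Omega>)" for i
    obtain x0 where x0: "x0 \<in> closure \<Omega>" using clne by (meson equals0I)
    have bda: "bdd_above (b i \<epsilon> ` closure \<Omega>)" if "i \<in> {1..K}" for i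
      using bBu[OF that] by (intro bdd_aboveI2[where M=B]) auto
    have bdb: "bdd_below (b i \<epsilon> ` closure \<Omega>)" if "i \<in> {1..K}" for i
      using bBl[OF that] by (intro bdd_belowI2[where m="-B"]) auto
    have SB: "\<forall>i\<in>{1..K}. \<bar>S i\<bar> \<le> B"
    proof
      fix i assume i: "i \<in> {1..K}"
      have "S i \<le> B" unfolding S_def using bBu[OF i] clne by (intro cSup_least) auto
      moreover have "b i \<epsilon> x0 \<le> S i" unfolding S_def using bda[OF i] x0 by (intro cSup_upper) auto
      moreover have "-B \<le> b i \<epsilon> x0" using bBl[OF i x0] by simp
      ultimately show "\<bar>S i\<bar> \<le> B" by simp
    qed
    have IB: "\<forall>i\<in>{1..K}. \<bar>I i\<bar> \<le> B"
    proof
      fix i assume i: "i \<in> {1..K}"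
      have "-B \<le> I i" unfolding I_def using bBl[OF i] clne by (intro cInf_greatest) auto
      moreover have "I i \<le> b i \<epsilon> x0" unfolding I_def using bdb[OF i] x0 by (intro cInf_lower) auto
      moreover have "b i \<epsilon> x0 \<le> B" using bBu[OF i x0] by simp
      ultimately show "\<bar>I i\<bar> \<le> B" by simp
    qed
    have S1: "S 1 \<le> - c3" unfolding S_def c3_def using neg(3) eps01 clne
      by (intro cSup_least) auto
    have I1: "I 1 \<le> - c3"
    proof -
      have "I 1 \<le> b 1 \<epsilon> x0" unfolding I_def using bdb[OF oneK(1)] x0 by (intro cInf_lower) auto
      also have "\<dots> \<le> - c3" unfolding c3_def using neg(3) eps01 x0 by auto
      finally show ?thesis .
    qed
    have IK: "I K \<ge> c4" unfolding I_def c4_def using pos(3) eps01 clne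
      by (intro cInf_greatest) auto
    have SK: "S K \<ge> c4"
    proof -
      have "c4 \<le> b K \<epsilon> x0" unfolding c4_def using pos(3) eps01 x0 by auto
      also have "\<dots> \<le> S K" unfolding S_def using bda[OF oneK(2)] x0 by (intro cSup_upper) auto
      finally show ?thesis .
    qed
    define \<delta> where "\<delta> = c3 / (real K * B + c3)"
    define y0 where "y0 = 1 + real K * B / c4"
    have KB: "real K * B \<ge> 0" using Bpos by simp
    have dpos: "\<delta> > 0" unfolding \<delta>_def using c3p KB by (intro divide_pos_pos) auto
    have y0pos: "y0 > 0" unfolding y0_def using c4p KB
      by (smt (verit) divide_nonneg_pos)
    have Ps: "(\<Sum>i=1..K. S i * y powi nn i) < 0" if "0 < y" "y \<le> \<delta>" for y
      using poly_small[OF K1 n1 S1 c3p Bpos SB that(1)] that(2) unfolding \<delta>_def .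
    have Qs: "(\<Sum>i=1..K. I i * y powi nn i) < 0" if "0 < y" "y \<le> \<delta>" for y
      using poly_small[OF K1 n1 I1 c3p Bpos IB that(1)] that(2) unfolding \<delta>_def .
    have Pl: "(\<Sum>i=1..K. S i * y powi nn i) > 0" if "y0 \<le> y" for y
      using poly_large[OF K1 nK SK c4p Bpos SB] that unfolding y0_def .
    have Ql: "(\<Sum>i=1..K. I i * y powi nn i) > 0" if "y0 \<le> y" for y
      using poly_large[OF K1 nK IK c4p Bpos IB] that unfolding y0_def .
    define A where "A = {c. c > 0 \<and> (\<forall>y\<in>{0<..<c}. (\<Sum>i=1..K. S i * y powi nn i) < 0)}"
    have aeq: "alpha' \<epsilon> = Sup A" unfolding A_def S_def by (rule alpha'_def)
    define Bs where "Bs = {c::real. \<forall>y\<in>{c<..}. (\<Sum>i=1..K. I i * y powi nn i) > 0}"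
    have beq: "beta' \<epsilon> = Inf Bs" unfolding Bs_def I_def by (rule beta'_def)
    have dA: "\<delta> \<in> A" unfolding A_def using dpos Ps by auto
    have Aub: "c \<le> y0" if "c \<in> A" for c
    proof (rule ccontr)
      assume "\<not> c \<le> y0"
      hence "y0 \<in> {0<..<c}" using y0pos by simp
      hence "(\<Sum>i=1..K. S i * y0 powi nn i) < 0" using that unfolding A_def by blast
      thus False using Pl[of y0] by simp
    qed
    have bddA: "bdd_above A" using Aub by (intro bdd_aboveI) 
    have al1: "\<delta> \<le> alpha' \<epsilon>" unfolding aeq by (rule cSup_upper[OF dA bddA])
    have al2: "alpha' \<epsilon> \<le> y0" unfolding aeq using dA Aub by (intro cSup_least) auto
    have y0B: "y0 \<in> Bs" unfolding Bs_def using Ql by auto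
    have Blb: "\<delta> \<le> c" if "c \<in> Bs" for c
    proof (rule ccontr)
      assume "\<not> \<delta> \<le> c"
      hence "\<delta> \<in> {c<..}" by simp
      hence "(\<Sum>i=1..K. I i * \<delta> powi nn i) > 0" using that unfolding Bs_def by blast
      thus False using Qs[of \<delta>] dpos by simp
    qed
    have bddB: "bdd_below Bs" using Blb by (intro bdd_belowI)
    have be1: "\<delta> \<le> beta' \<epsilon>" unfolding beq using y0B Blb by (intro cInf_greatest) auto
    have be2: "beta' \<epsilon> \<le> y0" unfolding beq by (rule cInf_lower[OF y0B bddB])
    define R where "R = Dr * \<epsilon> powr (-Nr)"
    have rhoR: "c5 \<le> \<rho> \<epsilon> x \<and> \<rho> \<epsilon> x \<le> R" if "x \<in> frontier \<Omega>" for x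
      using elim(2) rho eps01 frcl that unfolding R_def c5_def by (auto simp: abs_le_iff)
    obtain p0 where p0: "p0 \<in> frontier \<Omega>" using frne by (meson equals0I)
    have bdr1: "bdd_below (\<rho> \<epsilon> ` frontier \<Omega>)" using rhoR by (intro bdd_belowI2[where m=c5]) auto
    have bdr2: "bdd_above (\<rho> \<epsilon> ` frontier \<Omega>)" using rhoR by (intro bdd_aboveI2[where M=R]) auto
    have ir1: "c5 \<le> Inf (\<rho> \<epsilon> ` frontier \<Omega>)" using frne rhoR by (intro cInf_greatest) auto
    have sr1: "\<rho> \<epsilon> p0 \<le> Sup (\<rho> \<epsilon> ` frontier \<Omega>)" using p0 bdr2 by (intro cSup_upper) auto
    have sr2: "Sup (\<rho> \<epsilon> ` frontier \<Omega>) \<le> R" using frne rhoR by (intro cSup_least) auto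
    have alph_lo: "min \<delta> c5 \<le> alph \<epsilon>" using al1 ir1 alph_def[of \<epsilon>] by (auto simp: min_def max_def)
    have alph_hi: "alph \<epsilon> \<le> y0" using al2 alph_def[of \<epsilon>] by (auto simp: min_def max_def)
    have bet_lo: "\<delta> \<le> bet \<epsilon>" using be1 bet_def[of \<epsilon>] by (auto simp: min_def max_def)
    have bet_hi: "bet \<epsilon> \<le> y0 + R"
      using be2 sr2 bet_def[of \<epsilon>] y0pos rhoR[OF p0] c5p by (auto simp: min_def max_def)
    have mpos: "0 < min \<delta> c5" using dpos c5p by simp
    have Rpos: "R \<ge> 0" unfolding R_def using DNr by simp
    have one: "1 \<le> \<epsilon> powr (-E)" using pw[of "-E" 0] e0 unfolding E_def
      using Nnn DNr(2) by simp
    have dv: "\<epsilon> powr (-N) / \<epsilon> powr a \<le> \<epsilon> powr (-E)" if "\<bar>a\<bar> \<le> \<bar>a3\<bar> + \<bar>a4\<bar> + \<bar>a5\<bar>" for a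
    proof -
      have "\<epsilon> powr (-N) / \<epsilon> powr a = \<epsilon> powr (-N - a)" by (simp add: powr_diff)
      also have "\<dots> \<le> \<epsilon> powr (-E)" using that DNr(2) unfolding E_def by (intro pw) auto
      finally show ?thesis .
    qed
    have y0b: "y0 \<le> M1 * \<epsilon> powr (-E)"
    proof -
      have "real K * B / c4 = (real K * D / C4) * (\<epsilon> powr (-N) / \<epsilon> powr a4)"
        unfolding B_def c4_def by simp
      also have "\<dots> \<le> (real K * D / C4) * \<epsilon> powr (-E)"
        using dv[of a4] Dpos cpos by (intro mult_left_mono) auto
      finally show ?thesis unfolding y0_def M1_def using one by (simp add: algebra_simps)
    qed
    have idb: "1 / \<delta> \<le> M4 * \<epsilon> powr (-E)"
    proof -
      have "1 / \<delta> = 1 + real K * B / c3" unfolding \<delta>_def using c3p by (simp add: field_simps)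
      also have "real K * B / c3 = (real K * D / C3) * (\<epsilon> powr (-N) / \<epsilon> powr a3)"
        unfolding B_def c3_def by simp
      also have "\<dots> \<le> (real K * D / C3) * \<epsilon> powr (-E)"
        using dv[of a3] Dpos cpos by (intro mult_left_mono) auto
      finally show ?thesis unfolding M4_def using one by (simp add: algebra_simps)
    qed
    have ic5: "1 / c5 \<le> (1 / C5) * \<epsilon> powr (-E)"
    proof -
      have "1 / c5 = (1 / C5) * \<epsilon> powr (- a5)" unfolding c5_def by (simp add: powr_minus field_simps)
      also have "\<dots> \<le> (1 / C5) * \<epsilon> powr (-E)" using cpos Nnn DNr(2) unfolding E_def
        by (intro mult_left_mono pw) auto
      finally show ?thesis .
    qed
    have Rb: "R \<le> Dr * \<epsilon> powr (-E)" unfolding R_def using DNr Nnn unfolding E_def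
      by (intro mult_left_mono pw) auto
    have alphpos: "alph \<epsilon> > 0" using alph_lo mpos by linarith
    have betpos: "bet \<epsilon> > 0" using bet_lo dpos by linarith
    have g1: "\<bar>alph \<epsilon>\<bar> \<le> M1 * \<epsilon> powr (-E)" using alphpos alph_hi y0b by simp
    have g2: "\<bar>bet \<epsilon>\<bar> \<le> (M1 + Dr) * \<epsilon> powr (-E)" using betpos bet_hi y0b Rb by (simp add: algebra_simps)
    have g3: "\<bar>1 / alph \<epsilon>\<bar> \<le> (M4 + 1 / C5) * \<epsilon> powr (-E)"
    proof -
      have "1 / alph \<epsilon> \<le> 1 / min \<delta> c5" using alph_lo mpos by (intro divide_left_mono) auto
      also have "\<dots> \<le> 1 / \<delta> + 1 / c5" using dpos c5p by (simp add: min_def)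
      finally show ?thesis using alphpos idb ic5 by (simp add: algebra_simps)
    qed
    have g4: "\<bar>1 / bet \<epsilon>\<bar> \<le> M4 * \<epsilon> powr (-E)"
    proof -
      have "1 / bet \<epsilon> \<le> 1 / \<delta>" using bet_lo dpos by (intro divide_left_mono) auto
      thus ?thesis using betpos idb by simp
    qed
    show ?case using g1 g2 g3 g4 by blast
  qed
  show ?thesis
    by (intro conjI moderate_netI; rule eventually_mono[OF ev]) auto
qed

end
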